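(* There exists a constant $c>0$ and infinitely many pairs of integers $(n,\ell)$ with $1\le\ell<n$ such that $f(n,\ell)\ge c\,\frac{n}{\ell}\,\frac{\log n}{\log\log n}$. (For instance, one may take $n$ to be the product of the $k$ smallest primes and $\ell$ the smallest integer with $\pi(\ell)=k$.)
   Context: For integers $n\ge 2$ and $\ell\ge0$, a set $B\subseteq\mathbb{Z}_n$ is an $\ell$-covering set if $\{ab\bmod n: 0\le a\le\ell,\ b\in B\}=\mathbb{Z}_n$, and $f(n,\ell)$ is the minimum size of an $\ell$-covering set of $\mathbb{Z}_n$. $\pi$ is the prime counting function. Convention: $\log x$ denotes $\max(\ln x,1)$. *)

theory Defs
  imports Complex_Main
begin

definition covering_set :: "nat \<Rightarrow> nat \<Rightarrow> nat set \<Rightarrow> bool" where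
  "covering_set n l B \<longleftrightarrow> B \<subseteq> {0..<n} \<and>
     {(a * b) mod n | a b. a \<le> l \<and> b \<in> B} = {0..<n}"

definition fcov :: "nat \<Rightarrow> nat \<Rightarrow> nat" where
  "fcov n l = (LEAST k. \<exists>B. covering_set n l B \<and> card B = k)"

definition Log :: "real \<Rightarrow> real" where
  "Log x = max (ln x) 1"

end

theory Submission
  imports Defs "HOL-Number_Theory.Number_Theory"
begin


definition PS :: "nat \<Rightarrow> nat set" where "PS N = {p. prime p \<and> p \<le> N}"

lemma PS_finite[simp]: "finite (PS N)"
  unfolding PS_def by (rule finite_subset[of _ "{..N}"]) auto

lemma PS_0[simp]: "PS 0 = {}"
  unfolding PS_def by auto

lemma PS_Suc: "PS (Suc N) = (if prime (Suc N) then insert (Suc N) (PS N) else PS N)"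
  unfolding PS_def by (auto simp: le_Suc_eq)

lemma prod_primes_dvd:
  fixes c :: nat
  assumes "finite Q" "\<And>p. p \<in> Q \<Longrightarrow> prime p \<and> p dvd c"
  shows "\<Prod>Q dvd c"
  using assms
proof (induction Q rule: finite_induct)
  case empty then show ?case by simp
next
  case (insert x F)
  have "\<not> x dvd \<Prod>F"
  proof
    assume "x dvd \<Prod>F"
    then obtain y where "y \<in> F" "x dvd y" using insert prime_dvd_prod_iff[of F x "\<lambda>y. y"] by auto
    then have "x = y" using insert by (metis insertCI primes_dvd_imp_eq)
    then show False using insert \<open>y \<in> F\<close> by auto
  qed
  then have "coprime x (\<Prod>F)" using insert by (simp add: prime_imp_coprime)
  then show ?case using insert by (simp add: divides_mult)
qed

lemma choose_odd_le: "(2*m+1) choose m \<le> 4^m"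
proof -
  have "((2*m+1) choose m) + ((2*m+1) choose (m+1)) = (\<Sum>k\<in>{m,m+1}. (2*m+1) choose k)" by simp
  also have "\<dots> \<le> (\<Sum>k\<le>2*m+1. (2*m+1) choose k)" by (rule sum_mono2) auto
  also have "\<dots> = 2^(2*m+1)" by (rule choose_row_sum)
  finally have a: "((2*m+1) choose m) + ((2*m+1) choose (m+1)) \<le> 2^(2*m+1)" .
  have "(2*m+1) choose (m+1) = (2*m+1) choose m"
    using central_binomial_odd[of "2*m+1"] by simp
  with a have "2 * ((2*m+1) choose m) \<le> 2 * 4^m"
    by (simp add: power_mult power_add)
  then show ?thesis by simp
qed

lemma primorial_le: "\<Prod>(PS N) \<le> 4^N"
proof (induction N rule: less_induct)
  case (less N)
  show ?case
  proof (cases N)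
    case 0 then show ?thesis by simp
  next
    case (Suc M)
    show ?thesis
    proof (cases "prime N")
      case False
      then have "PS N = PS M" using Suc PS_Suc by simp
      then have "\<Prod>(PS N) \<le> 4^M" using less Suc by simp
      also have "\<dots> \<le> 4^N" using Suc by simp
      finally show ?thesis .
    next
      case True
      show ?thesis
      proof (cases "N = 2")
        case True
        have "p \<in> PS 2 \<longleftrightarrow> p = 2" for p using prime_ge_2_nat[of p] by (auto simp: PS_def)
        then have "PS 2 = {2}" by blast
        then show ?thesis using True by simp
      next
        case False
        then have "odd N" using True prime_ge_2_nat[of N] prime_odd_nat[of N] by simp
        then obtain m where m: "N = 2*m+1" by (metis oddE)
        have m1: "m \<ge> 1" using m True by (cases m) auto
        define Q where "Q = {p. prime p \<and> m+1 < p \<and> p \<le> 2*m+1}"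
        have fQ: "finite Q" unfolding Q_def by (rule finite_subset[of _ "{..2*m+1}"]) auto
        have split: "PS N = PS (m+1) \<union> Q" "PS (m+1) \<inter> Q = {}"
          unfolding PS_def Q_def m by auto
        have "\<Prod>(PS N) = \<Prod>(PS (m+1)) * \<Prod>Q"
          using split fQ by (simp add: prod.union_disjoint)
        moreover have "\<Prod>(PS (m+1)) \<le> 4^(m+1)" using less.IH[of "m+1"] m m1 by linarith
        moreover have "\<Prod>Q \<le> 4^m"
        proof -
          have "\<Prod>Q dvd (2*m+1) choose m"
          proof (rule prod_primes_dvd[OF fQ])
            fix p assume p: "p \<in> Q"
            then have pp: "prime p" and p1: "m+1 < p" and p2: "p \<le> 2*m+1" unfolding Q_def by auto
            have eq: "fact m * fact (2*m+1-m) * ((2*m+1) choose m) = (fact (2*m+1) :: nat)"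
              by (rule binomial_fact_lemma) simp
            have "p dvd (fact (2*m+1) :: nat)" using pp p2 prime_dvd_fact_iff[of p "2*m+1"] by blast
            have "2*m+1-m = m+1" by simp
            then have "p dvd fact m * fact (m+1) * ((2*m+1) choose m)" using eq \<open>p dvd fact (2*m+1)\<close>
              by simp
            moreover have "\<not> p dvd (fact m :: nat)" using pp p1 prime_dvd_fact_iff[of p m] by auto
            moreover have "\<not> p dvd (fact (m+1) :: nat)" using pp p1 prime_dvd_fact_iff[of p "m+1"] by auto
            ultimately have "p dvd (2*m+1) choose m" using pp by (simp add: prime_dvd_mult_iff)
            then show "prime p \<and> p dvd (2*m+1) choose m" using pp by simp
          qed
          then have "\<Prod>Q \<le> (2*m+1) choose m" by (rule dvd_imp_le) simp
          then show ?thesis using choose_odd_le[of m] by simp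
        qed
        ultimately have "\<Prod>(PS N) \<le> 4^(m+1) * 4^m" by (simp add: mult_le_mono)
        also have "\<dots> = 4^(m+1+m)" by (rule power_add[symmetric])
        also have "(4::nat)^(m+1+m) = 4^N" using m by (simp add: algebra_simps)
        finally show ?thesis .
      qed
    qed
  qed
qed

lemma theta_le: "(\<Sum>p\<in>PS N. ln (real p)) \<le> real N * ln 4"
proof -
  have pos: "\<And>p. p \<in> PS N \<Longrightarrow> real p > 0" unfolding PS_def using prime_gt_0_nat by auto
  have "(\<Sum>p\<in>PS N. ln (real p)) = ln (\<Prod>p\<in>PS N. real p)"
    using pos by (subst ln_prod) auto
  also have "(\<Prod>p\<in>PS N. real p) = real (\<Prod>(PS N))" by simp
  also have "ln \<dots> \<le> ln (4^N)"
    using primorial_le[of N] pos by (subst ln_le_cancel_iff) (auto intro!: prod_pos simp del: of_nat_prod)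
  also have "\<dots> = real N * ln 4" by (simp add: ln_realpow)
  finally show ?thesis .
qed



lemma card_mult_ge:
  assumes "p > 0"
  shows "N div p \<le> card {m\<in>{1..N}. p dvd m}"
proof -
  have "(\<lambda>k. p*k) ` {1..N div p} \<subseteq> {m\<in>{1..N}. p dvd m}"
  proof
    fix x assume "x \<in> (\<lambda>k. p*k) ` {1..N div p}"
    then obtain k where k0: "k \<in> {1..N div p}" "x = p*k" by (rule imageE) simp
    then have k: "x = p*k" "1 \<le> k" "k \<le> N div p" by auto
    have "p*k \<le> p*(N div p)" using k by simp
    also have "\<dots> \<le> N" by simp
    finally show "x \<in> {m\<in>{1..N}. p dvd m}" using k assms by auto
  qed
  moreover have "inj_on (\<lambda>k. p*k) {1..N div p}" using assms by (auto simp: inj_on_def)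
  ultimately have "card ((\<lambda>k. p*k) ` {1..N div p}) \<le> card {m\<in>{1..N}. p dvd m}"
    by (intro card_mono) auto
  then show ?thesis using \<open>inj_on _ _\<close> by (simp add: card_image)
qed

lemma sum_ln_le: "(\<Sum>m\<in>{1..N}. ln (real m)) \<le> real N * ln (real N)"
proof -
  have "(\<Sum>m\<in>{1..N}. ln (real m)) \<le> (\<Sum>m\<in>{1..N}. ln (real N))"
    by (intro sum_mono) auto
  then show ?thesis by simp
qed

lemma weighted_le:
  "(\<Sum>p\<in>PS N. real (N div p) * ln (real p)) \<le> real N * ln (real N)"
proof -
  have pr: "\<And>p. p \<in> PS N \<Longrightarrow> prime p" unfolding PS_def by auto
  have "(\<Sum>p\<in>PS N. real (N div p) * ln (real p)) \<le>
        (\<Sum>p\<in>PS N. real (card {m\<in>{1..N}. p dvd m}) * ln (real p))"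
  proof (intro sum_mono mult_right_mono)
    fix p assume "p \<in> PS N"
    then have "prime p" by (rule pr)
    then show "real (N div p) \<le> real (card {m\<in>{1..N}. p dvd m})"
      using card_mult_ge[of p N] prime_gt_0_nat[OF \<open>prime p\<close>] by simp
    show "0 \<le> ln (real p)" using prime_gt_0_nat[OF \<open>prime p\<close>] by simp
  qed
  also have "\<dots> = (\<Sum>p\<in>PS N. \<Sum>m\<in>{1..N}. if p dvd m then ln (real p) else 0)"
    by (intro sum.cong refl) (simp add: sum.inter_filter[symmetric])
  also have "\<dots> = (\<Sum>m\<in>{1..N}. \<Sum>p\<in>PS N. if p dvd m then ln (real p) else 0)"
    by (rule sum.swap)
  also have "\<dots> \<le> (\<Sum>m\<in>{1..N}. ln (real m))"
  proof (intro sum_mono)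
    fix m assume m: "m \<in> {1..N}"
    define Q where "Q = {p\<in>PS N. p dvd m}"
    have fQ: "finite Q" unfolding Q_def by simp
    have "(\<Sum>p\<in>PS N. if p dvd m then ln (real p) else 0) = (\<Sum>p\<in>Q. ln (real p))"
      unfolding Q_def by (rule sum.inter_filter[symmetric]) simp
    also have "\<dots> = ln (\<Prod>p\<in>Q. real p)"
      using fQ pr prime_gt_0_nat unfolding Q_def by (subst ln_prod) auto
    also have "(\<Prod>p\<in>Q. real p) = real (\<Prod>Q)" by simp
    also have "ln (real (\<Prod>Q)) \<le> ln (real m)"
    proof -
      have "\<Prod>Q dvd m" using fQ pr unfolding Q_def by (intro prod_primes_dvd) auto
      then have "\<Prod>Q \<le> m" using m by (intro dvd_imp_le) auto
      moreover have "\<Prod>Q > 0" using pr prime_gt_0_nat unfolding Q_def by (auto intro!: prod_pos)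
      ultimately show ?thesis by (simp del: of_nat_prod)
    qed
    finally show "(\<Sum>p\<in>PS N. if p dvd m then ln (real p) else 0) \<le> ln (real m)" .
  qed
  also have "\<dots> \<le> real N * ln (real N)" by (rule sum_ln_le)
  finally show ?thesis .
qed

lemma mertens1:
  assumes "N \<ge> 1"
  shows "(\<Sum>p\<in>PS N. ln (real p) / real p) \<le> ln (real N) + ln 4"
proof -
  have pr: "\<And>p. p \<in> PS N \<Longrightarrow> prime p" unfolding PS_def by auto
  have "(\<Sum>p\<in>PS N. (real N / real p - 1) * ln (real p)) \<le> (\<Sum>p\<in>PS N. real (N div p) * ln (real p))"
  proof (intro sum_mono mult_right_mono)
    fix p assume "p \<in> PS N"
    then have pp: "prime p" by (rule pr)
    then have p0: "p > 0" using prime_gt_0_nat by blast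
    have "N = p * (N div p) + N mod p" by simp
    moreover have "N mod p < p" using p0 by simp
    ultimately have "N \<le> p * (N div p) + p" by linarith
    then have "real N \<le> real p * real (N div p) + real p"
      by (metis of_nat_add of_nat_le_iff of_nat_mult)
    then have "real N / real p \<le> real (N div p) + 1" using p0 by (simp add: field_simps)
    then show "real N / real p - 1 \<le> real (N div p)" by simp
    show "0 \<le> ln (real p)" using p0 by simp
  qed
  also have "\<dots> \<le> real N * ln (real N)" by (rule weighted_le)
  finally have a: "(\<Sum>p\<in>PS N. (real N / real p - 1) * ln (real p)) \<le> real N * ln (real N)" .
  have "(\<Sum>p\<in>PS N. (real N / real p - 1) * ln (real p)) =
        real N * (\<Sum>p\<in>PS N. ln (real p) / real p) - (\<Sum>p\<in>PS N. ln (real p))"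
    by (simp add: sum_subtractf sum_distrib_left algebra_simps)
  with a theta_le[of N] have "real N * (\<Sum>p\<in>PS N. ln (real p) / real p) \<le> real N * (ln (real N) + ln 4)"
    by (simp add: algebra_simps)
  then show ?thesis using assms by simp
qed



definition SL :: "nat \<Rightarrow> real" where "SL N = (\<Sum>p\<in>PS N. ln (real p) / real p)"
definition SR :: "nat \<Rightarrow> real" where "SR N = (\<Sum>p\<in>PS N. 1 / real p)"

lemma SL_Suc: "SL (Suc N) = SL N + (if prime (Suc N) then ln (real (Suc N)) / real (Suc N) else 0)"
proof -
  have "Suc N \<notin> PS N" unfolding PS_def by auto
  then show ?thesis unfolding SL_def by (simp add: PS_Suc)
qed

lemma SR_Suc: "SR (Suc N) = SR N + (if prime (Suc N) then 1 / real (Suc N) else 0)"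
proof -
  have "Suc N \<notin> PS N" unfolding PS_def by auto
  then show ?thesis unfolding SR_def by (simp add: PS_Suc)
qed

definition G :: "nat \<Rightarrow> real" where
  "G N = SR N - SL N / ln (real N) - ln (ln (real N)) + ln 4 / ln (real N)"

lemma G_step:
  assumes N: "N \<ge> 2"
  shows "G (Suc N) \<le> G N"
proof -
  define L0 where "L0 = ln (real N)"
  define L1 where "L1 = ln (real (Suc N))"
  have L0pos: "L0 > 0" unfolding L0_def using N by simp
  have L01: "L0 < L1" unfolding L0_def L1_def using N by simp
  have L1pos: "L1 > 0" using L0pos L01 by simp
  define S where "S = SL N"
  have Sle: "S \<le> L0 + ln 4" unfolding S_def L0_def SL_def using mertens1[of N] N by simp
  have key: "SR (Suc N) - SL (Suc N) / L1 = SR N - S / L1"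
  proof (cases "prime (Suc N)")
    case True
    have e: "ln (real (Suc N)) = L1" by (simp add: L1_def)
    have "1 / real (Suc N) = (ln (real (Suc N)) / real (Suc N)) / L1"
      unfolding e using L1pos by (simp add: divide_simps)
    then show ?thesis using True unfolding S_def by (simp add: SL_Suc SR_Suc diff_divide_distrib add_divide_distrib)
  next
    case False
    then show ?thesis unfolding S_def by (simp add: SL_Suc SR_Suc)
  qed
  have d0: "1/L0 - 1/L1 \<ge> 0" using L0pos L01 by (simp add: frac_le)
  have "G (Suc N) - G N = (S - ln 4) * (1/L0 - 1/L1) - (ln L1 - ln L0)"
    unfolding G_def using key unfolding L0_def[symmetric] L1_def[symmetric] S_def[symmetric]
    by (simp add: algebra_simps diff_divide_distrib)
  also have "\<dots> \<le> L0 * (1/L0 - 1/L1) - (ln L1 - ln L0)"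
    using Sle d0 by (intro diff_right_mono mult_right_mono) auto
  also have "\<dots> = 1 - L0/L1 - (ln L1 - ln L0)" using L0pos by (simp add: field_simps)
  also have "\<dots> \<le> 0"
  proof -
    have "ln (L0/L1) \<le> L0/L1 - 1" using L0pos L1pos by (intro ln_le_minus_one) simp
    moreover have "ln (L0/L1) = ln L0 - ln L1" using L0pos L1pos by (simp add: ln_div)
    ultimately show ?thesis by simp
  qed
  finally show ?thesis by simp
qed

lemma G_le: "N \<ge> 2 \<Longrightarrow> G N \<le> G 2"
proof (induction N rule: dec_induct)
  case base then show ?case by simp
next
  case (step n) then show ?case using G_step[of n] by simp
qed

lemma G2: "G 2 = 2 - ln (ln 2)"
proof -
  have "PS 2 = {2}"
  proof -
    have "p \<in> PS 2 \<longleftrightarrow> p = 2" for p using prime_ge_2_nat[of p] by (auto simp: PS_def)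
    then show ?thesis by blast
  qed
  moreover have "ln (4::real) = 2 * ln 2"
    using ln_realpow[of 2 2] by simp
  ultimately show ?thesis unfolding G_def SL_def SR_def by simp
qed

lemma mertens2:
  assumes N: "N \<ge> 2"
  shows "SR N \<le> ln (ln (real N)) + (3 - ln (ln 2))"
proof -
  have L0pos: "ln (real N) > 0" using N by simp
  have "SL N \<le> ln (real N) + ln 4" unfolding SL_def using mertens1[of N] N by simp
  then have "SL N / ln (real N) \<le> 1 + ln 4 / ln (real N)"
    using L0pos by (simp add: field_simps)
  moreover have "G N \<le> 2 - ln (ln 2)" using G_le[OF N] G2 by simp
  ultimately show ?thesis unfolding G_def by simp
qed



lemma telescope: "N \<ge> 1 \<Longrightarrow> (\<Sum>k\<in>{2..N}. 1 / (real k * (real k - 1))) = 1 - 1 / real N"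
proof (induction N rule: dec_induct)
  case base then show ?case by simp
next
  case (step n)
  have "{2..Suc n} = insert (Suc n) {2..n}" using step by auto
  then have "(\<Sum>k\<in>{2..Suc n}. 1 / (real k * (real k - 1))) =
      1 / (real (Suc n) * (real (Suc n) - 1)) + (\<Sum>k\<in>{2..n}. 1 / (real k * (real k - 1)))" by simp
  also have "\<dots> = 1 / (real (Suc n) * real n) + (1 - 1 / real n)" using step by simp
  also have "\<dots> = 1 - 1 / real (Suc n)"
  proof -
    have "real n > 0" using step by simp
    moreover have "real n * real n \<ge> 0" by simp
    ultimately have "real n + real n * real n \<noteq> 0" by linarith
    with \<open>real n > 0\<close> show ?thesis by (simp add: field_simps)
  qed
  finally show ?case .
qed

lemma sum_recip2: "(\<Sum>p\<in>PS N. 1 / (real p * (real p - 1))) \<le> 1"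
proof (cases "N \<ge> 1")
  case True
  have "(\<Sum>p\<in>PS N. 1 / (real p * (real p - 1))) \<le> (\<Sum>k\<in>{2..N}. 1 / (real k * (real k - 1)))"
  proof (rule sum_mono2)
    show "PS N \<subseteq> {2..N}" unfolding PS_def using prime_ge_2_nat by auto
    fix k assume "k \<in> {2..N} - PS N"
    then have "real k \<ge> 2" by auto
    then show "0 \<le> 1 / (real k * (real k - 1))" by simp
  qed simp
  also have "\<dots> = 1 - 1 / real N" using telescope True by simp
  also have "\<dots> \<le> 1" by simp
  finally show ?thesis .
next
  case False
  then have "N = 0" by simp
  then show ?thesis by simp
qed

definition C1 :: real where "C1 = 3 - ln (ln 2)"

lemma prod_bound:
  assumes N: "N \<ge> 2"
  shows "(\<Prod>p\<in>PS N. 1 - 1 / real p) \<ge> exp (-(C1 + 1)) / ln (real N)"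
proof -
  have p2: "\<And>p. p \<in> PS N \<Longrightarrow> real p \<ge> 2" unfolding PS_def using prime_ge_2_nat by force
  have fpos: "1 - 1 / real p > 0" if "p \<in> PS N" for p
  proof -
    have "real p \<ge> 2" using p2 that .
    then show ?thesis by (simp add: field_simps)
  qed
  have each: "ln (1 - 1 / real p) \<ge> -(1 / real p + 1 / (real p * (real p - 1)))" if "p \<in> PS N" for p
  proof -
    have pr: "real p \<ge> 2" using p2 that .
    have "ln (real p / (real p - 1)) \<le> real p / (real p - 1) - 1"
      using pr by (intro ln_le_minus_one) simp
    moreover have "real p / (real p - 1) - 1 = 1 / real p + 1 / (real p * (real p - 1))"
      using pr by (simp add: field_simps)
    moreover have "ln (1 - 1 / real p) = - ln (real p / (real p - 1))"
    proof -
      have e: "1 - 1 / real p = inverse (real p / (real p - 1))" using pr by (simp add: field_simps)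
      have "ln (inverse (real p / (real p - 1))) = - ln (real p / (real p - 1))"
        by (rule ln_inverse)
      then show ?thesis unfolding e .
    qed
    ultimately show ?thesis by simp
  qed
  have "ln (\<Prod>p\<in>PS N. 1 - 1 / real p) = (\<Sum>p\<in>PS N. ln (1 - 1 / real p))"
    using fpos by (intro ln_prod) (simp, metis less_irrefl)
  also have "\<dots> \<ge> (\<Sum>p\<in>PS N. -(1 / real p + 1 / (real p * (real p - 1))))"
    using each by (intro sum_mono) auto
  finally have "ln (\<Prod>p\<in>PS N. 1 - 1 / real p) \<ge> - (SR N + (\<Sum>p\<in>PS N. 1 / (real p * (real p - 1))))"
    unfolding SR_def by (simp add: sum_negf sum.distrib sum_subtractf)
  moreover have "SR N \<le> ln (ln (real N)) + C1" using mertens2[OF N] unfolding C1_def by simp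
  ultimately have lb: "ln (\<Prod>p\<in>PS N. 1 - 1 / real p) \<ge> - (ln (ln (real N)) + C1 + 1)"
    using sum_recip2[of N] by linarith
  have Ppos: "(\<Prod>p\<in>PS N. 1 - 1 / real p) > 0" using fpos by (intro prod_pos) auto
  have lnN: "ln (real N) > 0" using N by simp
  have "exp (-(C1 + 1)) / ln (real N) = exp (- (ln (ln (real N)) + C1 + 1))"
    using lnN by (simp add: exp_diff exp_minus field_simps exp_add)
  also have "\<dots> \<le> exp (ln (\<Prod>p\<in>PS N. 1 - 1 / real p))" using lb by simp
  also have "\<dots> = (\<Prod>p\<in>PS N. 1 - 1 / real p)" using Ppos by simp
  finally show ?thesis .
qed

lemma prime_factors_primorial: "prime_factors (\<Prod>(PS N)) = PS N"
proof -
  have "prime_factors (\<Prod>(PS N)) = \<Union>((prime_factors \<circ> (\<lambda>p. p)) ` PS N)"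
    by (rule prime_factors_prod) (auto simp: PS_def)
  also have "\<dots> = \<Union>((\<lambda>p. {p}) ` PS N)"
    by (intro arg_cong[where f=Union] image_cong refl) (auto simp: PS_def prime_prime_factors)
  also have "\<dots> = PS N" by auto
  finally show ?thesis .
qed

lemma totient_primorial:
  "real (totient (\<Prod>(PS N))) = real (\<Prod>(PS N)) * (\<Prod>p\<in>PS N. 1 - 1 / real p)"
  using totient_formula2[of "\<Prod>(PS N)"] by (simp only: prime_factors_primorial)



lemma primorial_ge2: "N \<ge> 2 \<Longrightarrow> \<Prod>(PS N) \<ge> 2"
proof -
  assume N: "N \<ge> 2"
  have "2 \<in> PS N" using N unfolding PS_def by simp
  then have "2 dvd \<Prod>(PS N)" by (intro dvd_prodI) auto
  moreover have "\<Prod>(PS N) > 0" unfolding PS_def using prime_gt_0_nat by (auto intro!: prod_pos)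
  ultimately show ?thesis by (simp add: dvd_imp_le)
qed

lemma covering_exists: "n \<ge> 1 \<Longrightarrow> l \<ge> 1 \<Longrightarrow> covering_set n l {0..<n}"
  unfolding covering_set_def
proof (intro conjI)
  assume n: "n \<ge> 1" and l: "l \<ge> 1"
  show "{0..<n} \<subseteq> {0..<n}" by simp
  show "{a * b mod n |a b. a \<le> l \<and> b \<in> {0..<n}} = {0..<n}"
  proof
    show "{a * b mod n |a b. a \<le> l \<and> b \<in> {0..<n}} \<subseteq> {0..<n}" using n by auto
    show "{0..<n} \<subseteq> {a * b mod n |a b. a \<le> l \<and> b \<in> {0..<n}}"
    proof
      fix x assume x: "x \<in> {0..<n}"
      then have "x = 1 * x mod n \<and> 1 \<le> l \<and> x \<in> {0..<n}" using l by simp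
      then show "x \<in> {a * b mod n |a b. a \<le> l \<and> b \<in> {0..<n}}" by blast
    qed
  qed
qed

lemma totatives_sub:
  assumes N: "N \<ge> 2" and B: "covering_set (\<Prod>(PS N)) N B"
  shows "totatives (\<Prod>(PS N)) \<subseteq> B"
proof
  define n where "n = \<Prod>(PS N)"
  have n2: "n \<ge> 2" unfolding n_def using primorial_ge2[OF N] .
  fix k assume k: "k \<in> totatives (\<Prod>(PS N))"
  then have kc: "coprime k n" and k1: "k > 0" and kn: "k \<le> n" unfolding n_def by (auto simp: in_totatives_iff)
  have "k \<noteq> n"
  proof
    assume "k = n"
    with kc have "coprime n n" by simp
    then have "n = 1" by simp
    with n2 show False by simp
  qed
  with kn have "k \<in> {0..<n}" by simp
  with B have "k \<in> {(a * b) mod n | a b. a \<le> N \<and> b \<in> B}" unfolding covering_set_def n_def by simp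
  then obtain a b where ab: "k = (a*b) mod n" "a \<le> N" "b \<in> B" by blast
  have bn: "b < n" using ab(3) B unfolding covering_set_def n_def by auto
  have "coprime (a*b) n" using kc ab(1) n2 by simp
  then have ca: "coprime a n" by simp
  have "a = 1"
  proof (rule ccontr)
    assume "a \<noteq> 1"
    then obtain p where p: "prime p" "p dvd a" using prime_factor_nat by blast
    have "a \<noteq> 0"
    proof
      assume "a = 0"
      with ca have "n = 1" by simp
      with n2 show False by simp
    qed
    then have "p \<le> a" using p by (simp add: dvd_imp_le)
    with ab(2) p have "p \<in> PS N" unfolding PS_def by simp
    then have "p dvd n" unfolding n_def by (intro dvd_prodI) auto
    with p ca show False
      by (metis coprime_common_divisor not_prime_unit)
  qed
  with ab bn show "k \<in> B" by simp
qed

lemma fcov_ge: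
  assumes N: "N \<ge> 2"
  shows "fcov (\<Prod>(PS N)) N \<ge> totient (\<Prod>(PS N))"
proof -
  define n where "n = \<Prod>(PS N)"
  have n2: "n \<ge> 2" unfolding n_def using primorial_ge2[OF N] .
  have ex: "\<exists>k. \<exists>B. covering_set n N B \<and> card B = k"
    using covering_exists[of n N] n2 N by auto
  obtain B where B: "covering_set n N B" "card B = fcov n N"
    using LeastI_ex[OF ex] unfolding fcov_def by blast
  have fin: "finite B" using B(1) unfolding covering_set_def by (auto intro: finite_subset)
  have "totatives n \<subseteq> B" using totatives_sub[OF N] B(1) unfolding n_def by simp
  then have "card (totatives n) \<le> card B" using fin by (intro card_mono)
  then show ?thesis using B(2) unfolding n_def totient_def by simp
qed



lemma ln4_ge1: "ln (4::real) \<ge> 1"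
  using exp_le by (subst ln_ge_iff) auto

lemma Log_ge1: "Log x \<ge> 1" unfolding Log_def by simp

lemma t_over_Log:
  fixes t T :: real
  assumes t1: "1 \<le> t" and tT: "t \<le> T" and T1: "T > 1"
  shows "t / Log t \<le> 2 * T / ln T"
proof -
  have lnT: "ln T > 0" using T1 by simp
  have sT: "sqrt T > 0" using T1 by simp
  have Lt: "Log t \<ge> 1" by (rule Log_ge1)
  show ?thesis
  proof (cases "t \<ge> sqrt T")
    case True
    have tp: "t > 0" using True sT by linarith
    have "ln t \<ge> ln (sqrt T)" by (subst ln_le_cancel_iff[OF sT tp]) (rule True)
    also have "ln (sqrt T) = ln T / 2" using T1 by (simp add: ln_sqrt)
    finally have "Log t \<ge> ln T / 2" unfolding Log_def by simp
    then have "t / Log t \<le> t / (ln T / 2)" using lnT t1 by (intro divide_left_mono) auto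
    also have "\<dots> \<le> T / (ln T / 2)" using tT lnT by (intro divide_right_mono) auto
    also have "\<dots> = 2 * T / ln T" by simp
    finally show ?thesis .
  next
    case False
    have "t / Log t \<le> t" using Lt t1 by (simp add: divide_le_eq)
    also have "\<dots> \<le> sqrt T" using False by simp
    also have "sqrt T \<le> 2 * T / ln T"
    proof -
      have "ln (sqrt T) \<le> sqrt T - 1" using sT by (rule ln_le_minus_one)
      then have "ln T \<le> 2 * sqrt T" using T1 by (simp add: ln_sqrt)
      then have "sqrt T * ln T \<le> sqrt T * (2 * sqrt T)" using sT by (intro mult_left_mono) auto
      also have "\<dots> = 2 * T" using T1 by simp
      finally show ?thesis using lnT by (simp add: field_simps)
    qed
    finally show ?thesis .
  qed
qed

lemma primorial_gt:
  assumes "prime N" "N \<ge> 3"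
  shows "N < \<Prod>(PS N)"
proof -
  have sub: "{2, N} \<subseteq> PS N" using assms unfolding PS_def by auto
  have "\<Prod>(PS N) = \<Prod>{2,N} * \<Prod>(PS N - {2,N})"
    using prod.subset_diff[OF sub PS_finite, of "\<lambda>x. x"] by (simp add: mult.commute)
  moreover have "\<Prod>(PS N - {2,N}) \<ge> 1"
  proof -
    have "\<Prod>(PS N - {2,N}) > 0" unfolding PS_def using prime_gt_0_nat by (auto intro!: prod_pos)
    then show ?thesis by linarith
  qed
  moreover have "\<Prod>{2,N} = 2 * N" using assms by simp
  ultimately have "\<Prod>(PS N) \<ge> 2 * N" by (metis mult_le_mono2 nat_mult_1_right)
  then show ?thesis using assms by simp
qed

lemma key_ineq:
  assumes pN: "prime N" and N3: "N \<ge> 3"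
  shows "real (fcov (\<Prod>(PS N)) N) \<ge>
    (exp (-(C1 + 1)) / (2 * ln 4)) * (real (\<Prod>(PS N)) / real N) *
      (Log (real (\<Prod>(PS N))) / Log (Log (real (\<Prod>(PS N)))))"
proof -
  define n where "n = \<Prod>(PS N)"
  define K where "K = exp (-(C1 + 1))"
  define T where "T = real N * ln 4"
  have N2: "N \<ge> 2" using N3 by simp
  have Kpos: "K > 0" unfolding K_def by simp
  have n2: "n \<ge> 2" unfolding n_def using primorial_ge2[OF N2] .
  have lnN: "ln (real N) > 0" using N3 by simp
  have T1: "T > 1"
  proof -
    have "real N \<ge> 3" using N3 by simp
    then have "real N * ln 4 \<ge> 3 * 1" using ln4_ge1 by (intro mult_mono) auto
    then show ?thesis unfolding T_def by simp
  qed
  have lnn: "ln (real n) \<le> T"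
  proof -
    have pos: "\<And>p. p \<in> PS N \<Longrightarrow> real p > 0" unfolding PS_def using prime_gt_0_nat by auto
    have "ln (real n) = ln (\<Prod>p\<in>PS N. real p)" unfolding n_def by simp
    also have "\<dots> = (\<Sum>p\<in>PS N. ln (real p))" using pos by (subst ln_prod) auto
    also have "\<dots> \<le> T" unfolding T_def by (rule theta_le)
    finally show ?thesis .
  qed
  define t where "t = Log (real n)"
  have t1: "1 \<le> t" unfolding t_def by (rule Log_ge1)
  have tT: "t \<le> T" unfolding t_def Log_def using lnn T1 by simp
  have "t / Log t \<le> 2 * T / ln T" by (rule t_over_Log[OF t1 tT T1])
  also have "\<dots> \<le> 2 * T / ln (real N)"
  proof -
    have "ln (real N) \<le> ln T" unfolding T_def using ln4_ge1 N3
      by (subst ln_le_cancel_iff) (auto simp: mult_le_cancel_left1)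
    moreover have "2 * T \<ge> 0" using T1 by simp
    ultimately show ?thesis using lnN by (intro divide_left_mono) auto
  qed
  finally have tb0: "t / Log t \<le> 2 * T / ln (real N)" .
  have "2 * T = 2 * ln 4 * real N" unfolding T_def by simp
  with tb0 have tb: "t / Log t \<le> 2 * ln 4 * real N / ln (real N)" by simp
  have "(K / (2 * ln 4)) * (real n / real N) * (t / Log t)
        \<le> (K / (2 * ln 4)) * (real n / real N) * (2 * ln 4 * real N / ln (real N))"
    using tb Kpos ln4_ge1 by (intro mult_left_mono) auto
  also have "\<dots> = real n * (K / ln (real N))" using N3 ln4_ge1 by (simp add: field_simps)
  also have "\<dots> \<le> real n * (\<Prod>p\<in>PS N. 1 - 1 / real p)"
    using prod_bound[OF N2] unfolding K_def by (intro mult_left_mono) auto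
  also have "\<dots> = real (totient n)" unfolding n_def by (rule totient_primorial[symmetric])
  also have "\<dots> \<le> real (fcov n N)" unfolding n_def using fcov_ge[OF N2] by simp
  finally show ?thesis unfolding n_def t_def K_def .
qed

theorem mainTheorem12:
  shows "\<exists>c::real. c > 0 \<and>
    infinite {(n::nat, l::nat). 1 \<le> l \<and> l < n \<and>
      real (fcov n l) \<ge> c * (real n / real l) * (Log (real n) / Log (Log (real n)))}"
proof (intro exI conjI)
  show "exp (-(C1 + 1)) / (2 * ln 4) > (0::real)" using ln4_ge1 by simp
  define S where "S = {(n::nat, l::nat). 1 \<le> l \<and> l < n \<and>
      real (fcov n l) \<ge> (exp (-(C1 + 1)) / (2 * ln 4)) * (real n / real l) * (Log (real n) / Log (Log (real n)))}"
  define P where "P = {N::nat. prime N \<and> N \<ge> 3}"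
  have "P = {N. prime N} - {..2}" unfolding P_def by auto
  then have infP: "infinite P" using primes_infinite by simp
  have sub: "(\<lambda>N. (\<Prod>(PS N), N)) ` P \<subseteq> S"
  proof
    fix x assume "x \<in> (\<lambda>N. (\<Prod>(PS N), N)) ` P"
    then obtain N where N: "N \<in> P" "x = (\<Prod>(PS N), N)" by (rule imageE) simp
    then have pN: "prime N" and N3: "N \<ge> 3" unfolding P_def by auto
    show "x \<in> S" unfolding S_def N(2) using key_ineq[OF pN N3] primorial_gt[OF pN N3] N3 by simp
  qed
  have "inj_on (\<lambda>N. (\<Prod>(PS N), N)) P" by (auto simp: inj_on_def)
  then have "infinite ((\<lambda>N. (\<Prod>(PS N), N)) ` P)" using infP finite_imageD by blast
  then have "infinite S" using sub infinite_super by blast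
  then show "infinite {(n::nat, l::nat). 1 \<le> l \<and> l < n \<and>
      real (fcov n l) \<ge> (exp (-(C1 + 1)) / (2 * ln 4)) * (real n / real l) * (Log (real n) / Log (Log (real n)))}"
    unfolding S_def .
qed


end
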